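(* Let $\mathcal{C}=\langle E,X\rangle$ be a stable configuration structure and $y^\dagger\in X$ a finite configuration. For every finite configuration $x\in X$, $\lfloor x\rfloor_{\mathcal{C}}\odot\mathsf{E}(\mathcal{C}[y^\dagger])$ is a polarized event structure.
   Context: A configuration structure is $\mathcal{C}=\langle E,X\rangle$ with $E$ countable and $X\subseteq\mathcal{P}(E)$. It is stable if: $\emptyset\in X$; for all nonempty $x\in X$ there is $a\in x$ with $x\setminus\{a\}\in X$; for all $x,y,z\in X$, $x\cup y\subseteq z$ implies $x\cup y\in X$; $X$ is closed under binary intersection; and for all $x,y,z\in X$, if each of $x\cup y$, $y\cup z$, $x\cup z$ is contained in some element of $X$ then $x\cup y\cup z\in X$. $u\frown_{\mathcal{C}}v$ if $\{u,v\}$ has a least upper bound in $(X,\subseteq)$; $Y\subseteq X$ is pairwise consistent if $Y\neq\emptyset$ and any two distinct elements have a least upper bound; $p\in X$ is a complete prime if for every pairwise consistent $Y$ whose least upper bound $\bigsqcup Y$ exists with $p\subseteq\bigsqcup Y$, some $y\in Y$ satisfies $p\subseteq y$; $\mathsf{Pr}(\mathcal{C})$ is the set of complete primes; $\lfloor x\rfloor_{\mathcal{C}}:=\{p\in\mathsf{Pr}(\mathcal{C})\mid p\subseteq x\}$. A prime event structure is $(E,<,\#)$ with $<$ a partial order, $\#$ irreflexive symmetric, $e\#e'<e''\Rightarrow e\#e''$; configurations are conflict-free $<$-downward-closed subsets. $\mathsf{E}(\mathcal{C}):=(\mathsf{Pr}(\mathcal{C}),<,\#)$ with $p<q$ iff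 $p\subseteq q$, $p\#q$ iff not $p\frown_{\mathcal{C}}q$; $\mathsf{E}(\mathcal{C}[y^\dagger]):=\mathsf{E}(\mathcal{C})[\pi_{y^\dagger}]$ with $\pi_{y^\dagger}(p)=-1$ if $p\subseteq y^\dagger$ and $1$ otherwise. A polarized event structure $\mathbb{E}[\pi]$ is a prime event structure $\mathbb{E}=(E,<,\#)$ with $\pi:E\to\{-1,1\}$ such that $\{e\mid\pi(e)<0\}$ is a configuration of $\mathbb{E}$. Switch of a prime event structure $\mathbb{E}=(E,<,\#)$ on a finite configuration $X'$: $X'\odot\mathbb{E}:=(E,<',\#')$ with $a<'b$ iff ($a<b$ and $\{a,b\}\cap X'=\emptyset$) or ($b<a$ and $\{a,b\}\subseteq X'$) or ($a\#b$ and $a\in X'$); $a\#'b$ iff ($a\#b$ and $\{a,b\}\cap X'=\emptyset$) or ($a<b$, $a\in X'$, $b\notin X'$). Switch of a polarized structure: $X'\odot\mathbb{E}[\pi]:=(X'\odot\mathbb{E})[\pi']$ with $\pi'(e)=-\pi(e)$ if $e\in X'$ and $\pi'(e)=\pi(e)$ otherwise. *)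

theory Defs
  imports Main "HOL-Library.Countable_Set"
begin

definition config_structure :: "'a set \<Rightarrow> 'a set set \<Rightarrow> bool" where
  "config_structure E X \<longleftrightarrow> countable E \<and> X \<subseteq> Pow E"

definition stable :: "'a set \<Rightarrow> 'a set set \<Rightarrow> bool" where
  "stable E X \<longleftrightarrow> config_structure E X \<and>
     {} \<in> X \<and>
     (\<forall>x\<in>X. x \<noteq> {} \<longrightarrow> (\<exists>a\<in>x. x - {a} \<in> X)) \<and>
     (\<forall>x\<in>X. \<forall>y\<in>X. \<forall>z\<in>X. x \<union> y \<subseteq> z \<longrightarrow> x \<union> y \<in> X) \<and>
     (\<forall>x\<in>X. \<forall>y\<in>X. x \<inter> y \<in> X) \<and>
     (\<forall>x\<in>X. \<forall>y\<in>X. \<forall>z\<in>X.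
        (\<exists>w\<in>X. x \<union> y \<subseteq> w) \<and> (\<exists>w\<in>X. y \<union> z \<subseteq> w) \<and> (\<exists>w\<in>X. x \<union> z \<subseteq> w)
        \<longrightarrow> x \<union> y \<union> z \<in> X)"

definition lub_in :: "'a set set \<Rightarrow> 'a set set \<Rightarrow> 'a set \<Rightarrow> bool" where
  "lub_in X Y z \<longleftrightarrow> z \<in> X \<and> (\<forall>y\<in>Y. y \<subseteq> z) \<and>
     (\<forall>w\<in>X. (\<forall>y\<in>Y. y \<subseteq> w) \<longrightarrow> z \<subseteq> w)"

definition has_lub :: "'a set set \<Rightarrow> 'a set set \<Rightarrow> bool" where
  "has_lub X Y \<longleftrightarrow> (\<exists>z. lub_in X Y z)"

definition consistent :: "'a set set \<Rightarrow> 'a set \<Rightarrow> 'a set \<Rightarrow> bool" where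
  "consistent X u v \<longleftrightarrow> has_lub X {u, v}"

definition pairwise_consistent :: "'a set set \<Rightarrow> 'a set set \<Rightarrow> bool" where
  "pairwise_consistent X Y \<longleftrightarrow> Y \<subseteq> X \<and> Y \<noteq> {} \<and>
     (\<forall>u\<in>Y. \<forall>v\<in>Y. u \<noteq> v \<longrightarrow> has_lub X {u, v})"

definition complete_prime :: "'a set set \<Rightarrow> 'a set \<Rightarrow> bool" where
  "complete_prime X p \<longleftrightarrow> p \<in> X \<and>
     (\<forall>Y z. pairwise_consistent X Y \<longrightarrow> lub_in X Y z \<longrightarrow> p \<subseteq> z \<longrightarrow> (\<exists>y\<in>Y. p \<subseteq> y))"

definition primes :: "'a set set \<Rightarrow> 'a set set" where
  "primes X = {p. complete_prime X p}"

definition prime_floor :: "'a set set \<Rightarrow> 'a set \<Rightarrow> 'a set set" where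
  "prime_floor X x = {p \<in> primes X. p \<subseteq> x}"

text \<open>A prime event structure: events, strict causality, conflict.
  Relations are required to relate only events.\<close>
type_synonym 'e pes = "'e set \<times> ('e \<Rightarrow> 'e \<Rightarrow> bool) \<times> ('e \<Rightarrow> 'e \<Rightarrow> bool)"

definition is_pes :: "'e pes \<Rightarrow> bool" where
  "is_pes P \<longleftrightarrow> (case P of (E, lt, cf) \<Rightarrow>
     (\<forall>a b. lt a b \<longrightarrow> a \<in> E \<and> b \<in> E) \<and>
     (\<forall>a b. cf a b \<longrightarrow> a \<in> E \<and> b \<in> E) \<and>
     (\<forall>a\<in>E. \<not> lt a a) \<and>
     (\<forall>a\<in>E. \<forall>b\<in>E. \<forall>c\<in>E. lt a b \<longrightarrow> lt b c \<longrightarrow> lt a c) \<and>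
     (\<forall>a\<in>E. \<not> cf a a) \<and>
     (\<forall>a\<in>E. \<forall>b\<in>E. cf a b \<longrightarrow> cf b a) \<and>
     (\<forall>a\<in>E. \<forall>b\<in>E. \<forall>c\<in>E. cf a b \<longrightarrow> lt b c \<longrightarrow> cf a c))"

definition pes_config :: "'e pes \<Rightarrow> 'e set \<Rightarrow> bool" where
  "pes_config P x \<longleftrightarrow> (case P of (E, lt, cf) \<Rightarrow>
     x \<subseteq> E \<and> (\<forall>a\<in>x. \<forall>b\<in>x. \<not> cf a b) \<and>
     (\<forall>b\<in>x. \<forall>a\<in>E. lt a b \<longrightarrow> a \<in> x))"

type_synonym 'e ppes = "'e pes \<times> ('e \<Rightarrow> int)"

definition is_polarized :: "'e ppes \<Rightarrow> bool" where
  "is_polarized Q \<longleftrightarrow> (case Q of (P, pol) \<Rightarrow>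
     is_pes P \<and> (\<forall>e\<in>fst P. pol e \<in> {-1, 1}) \<and>
     pes_config P {e \<in> fst P. pol e < 0})"

definition ES_of :: "'a set set \<Rightarrow> 'a set pes" where
  "ES_of X = (primes X,
     (\<lambda>p q. p \<in> primes X \<and> q \<in> primes X \<and> p \<subset> q),
     (\<lambda>p q. p \<in> primes X \<and> q \<in> primes X \<and> \<not> consistent X p q))"

definition pol_of :: "'a set \<Rightarrow> 'a set \<Rightarrow> int" where
  "pol_of y p = (if p \<subseteq> y then -1 else 1)"

text \<open>E(C[y]) = E(C)[pi_y]\<close>
definition ES_pol :: "'a set set \<Rightarrow> 'a set \<Rightarrow> 'a set ppes" where
  "ES_pol X y = (ES_of X, pol_of y)"

text \<open>The new conflict is taken symmetrically closed.\<close>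
definition switch :: "'e set \<Rightarrow> 'e pes \<Rightarrow> 'e pes" where
  "switch X' P = (case P of (E, lt, cf) \<Rightarrow>
     (E,
      (\<lambda>a b. (lt a b \<and> a \<notin> X' \<and> b \<notin> X') \<or> (lt b a \<and> a \<in> X' \<and> b \<in> X') \<or> (cf a b \<and> a \<in> X')),
      (\<lambda>a b. (cf a b \<and> a \<notin> X' \<and> b \<notin> X') \<or>
             (lt a b \<and> a \<in> X' \<and> b \<notin> X') \<or> (lt b a \<and> b \<in> X' \<and> a \<notin> X'))))"

definition switch_pol :: "'e set \<Rightarrow> 'e ppes \<Rightarrow> 'e ppes" where
  "switch_pol X' Q = (case Q of (P, pol) \<Rightarrow>
     (switch X' P, (\<lambda>e. if e \<in> X' then - pol e else pol e)))"

end

theory Submission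
  imports Defs
begin

lemma cons_sub:
  assumes "stable E X" "p \<in> X" "q \<in> X" "z \<in> X" "p \<union> q \<subseteq> z"
  shows "consistent X p q"
proof -
  have "p \<union> q \<in> X" using assms unfolding stable_def by blast
  then have "lub_in X {p, q} (p \<union> q)" unfolding lub_in_def by auto
  then show ?thesis unfolding consistent_def has_lub_def by blast
qed

lemma cons_sym: "consistent X p q = consistent X q p"
  unfolding consistent_def by (simp add: insert_commute)

lemma cons_refl: "p \<in> X \<Longrightarrow> consistent X p p"
  unfolding consistent_def has_lub_def lub_in_def by auto

lemma cons_mono:
  assumes "stable E X" "consistent X p r" "q \<subseteq> r" "p \<in> X" "q \<in> X"
  shows "consistent X p q"
proof -
  obtain z where "lub_in X {p, r} z" using assms(2) unfolding consistent_def has_lub_def by blast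
  then have "z \<in> X" "p \<union> q \<subseteq> z" using assms(3) unfolding lub_in_def by auto
  then show ?thesis using cons_sub[OF assms(1) assms(4) assms(5)] by blast
qed

lemma primes_X: "p \<in> primes X \<Longrightarrow> p \<in> X"
  unfolding primes_def complete_prime_def by auto

lemma ES_pes:
  assumes st: "stable E X"
  shows "is_pes (ES_of X)"
  unfolding ES_of_def is_pes_def
  using cons_refl[OF primes_X] cons_sym cons_mono[OF st _ _ primes_X primes_X]
  apply (auto simp del: psubset_eq intro: psubset_trans dest: psubset_imp_subset)
  using cons_sym by blast

lemma ES_floor:
  assumes st: "stable E X" and xX: "x \<in> X"
  shows "pes_config (ES_of X) (prime_floor X x)"
  unfolding ES_of_def pes_config_def prime_floor_def
  using cons_sub[OF st primes_X primes_X xX]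
  by (auto simp del: psubset_eq dest: psubset_imp_subset)


lemma switch_pes:
  assumes "is_pes (E, lt, cf)" "pes_config (E, lt, cf) L"
  shows "is_pes (switch L (E, lt, cf))"
proof -
  have A1: "\<And>a b. lt a b \<Longrightarrow> a \<in> E \<and> b \<in> E" and A2: "\<And>a b. cf a b \<Longrightarrow> a \<in> E \<and> b \<in> E"
   and A3: "\<And>a. a\<in>E \<Longrightarrow> \<not> lt a a"
   and A4: "\<And>a b c. a\<in>E \<Longrightarrow> b\<in>E \<Longrightarrow> c\<in>E \<Longrightarrow> lt a b \<Longrightarrow> lt b c \<Longrightarrow> lt a c"
   and A5: "\<And>a. a\<in>E \<Longrightarrow> \<not> cf a a" and A6: "\<And>a b. a\<in>E \<Longrightarrow> b\<in>E \<Longrightarrow> cf a b \<Longrightarrow> cf b a"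
   and A7: "\<And>a b c. a\<in>E \<Longrightarrow> b\<in>E \<Longrightarrow> c\<in>E \<Longrightarrow> cf a b \<Longrightarrow> lt b c \<Longrightarrow> cf a c"
    using assms(1) unfolding is_pes_def prod.case by blast+
  have B1: "L \<subseteq> E" and B2: "\<And>a b. a\<in>L \<Longrightarrow> b\<in>L \<Longrightarrow> \<not> cf a b"
   and B3: "\<And>a b. b\<in>L \<Longrightarrow> a\<in>E \<Longrightarrow> lt a b \<Longrightarrow> a \<in> L"
    using assms(2) unfolding pes_config_def prod.case by blast+
  define lt' where "lt' = (\<lambda>a b. (lt a b \<and> a \<notin> L \<and> b \<notin> L) \<or> (lt b a \<and> a \<in> L \<and> b \<in> L) \<or> (cf a b \<and> a \<in> L))"
  define cf' where "cf' = (\<lambda>a b. (cf a b \<and> a \<notin> L \<and> b \<notin> L) \<or>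
             (lt a b \<and> a \<in> L \<and> b \<notin> L) \<or> (lt b a \<and> b \<in> L \<and> a \<notin> L))"
  have "switch L (E, lt, cf) = (E, lt', cf')" unfolding switch_def lt'_def cf'_def by simp
  moreover have "is_pes (E, lt', cf')"
    unfolding is_pes_def prod.case
  proof (intro conjI ballI allI impI)
    fix a b assume "lt' a b" then show "a \<in> E" unfolding lt'_def using A1 A2 by blast
  next
    fix a b assume "lt' a b" then show "b \<in> E" unfolding lt'_def using A1 A2 by blast
  next
    fix a b assume "cf' a b" then show "a \<in> E" unfolding cf'_def using A1 A2 by blast
  next
    fix a b assume "cf' a b" then show "b \<in> E" unfolding cf'_def using A1 A2 by blast
  next
    fix a assume "a \<in> E" then show "\<not> lt' a a" unfolding lt'_def using A3 A5 by blast
  next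
    fix a b c assume E: "a \<in> E" "b \<in> E" "c \<in> E" and ab: "lt' a b" and bc: "lt' b c"
    show "lt' a c"
    proof (cases "a \<in> L")
      case aL: True
      show ?thesis
      proof (cases "b \<in> L")
        case True
        then have ba: "lt b a" using ab aL B2 unfolding lt'_def by blast
        show ?thesis
        proof (cases "c \<in> L")
          case True
          then have "lt c b" using bc \<open>b \<in> L\<close> B2 unfolding lt'_def by blast
          then show ?thesis using A4[OF E(3) E(2) E(1)] ba aL True unfolding lt'_def by blast
        next
          case False
          then have "cf b c" using bc \<open>b \<in> L\<close> unfolding lt'_def by blast
          then have "cf a c" using A6 A7 E ba by blast
          then show ?thesis using aL unfolding lt'_def by blast
        qed
      next
        case False
        then have "cf a b" using ab aL unfolding lt'_def by blast
        moreover have "lt b c" "c \<notin> L" using bc False unfolding lt'_def by blast+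
        ultimately show ?thesis using A7 E aL unfolding lt'_def by blast
      qed
    next
      case aL: False
      then have "lt a b" "b \<notin> L" using ab unfolding lt'_def by blast+
      moreover have "lt b c" "c \<notin> L" using bc \<open>b \<notin> L\<close> unfolding lt'_def by blast+
      ultimately show ?thesis using A4 E aL unfolding lt'_def by blast
    qed
  next
    fix a assume "a \<in> E" then show "\<not> cf' a a" unfolding cf'_def using A3 A5 by blast
  next
    fix a b assume "a \<in> E" "b \<in> E" "cf' a b" then show "cf' b a" unfolding cf'_def using A6 by blast
  next
    fix a b c assume E: "a \<in> E" "b \<in> E" "c \<in> E" and ab: "cf' a b" and bc: "lt' b c"
    show "cf' a c"
    proof (cases "b \<in> L")
      case True
      then have ba: "lt b a" "a \<notin> L" using ab unfolding cf'_def by blast+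
      show ?thesis
      proof (cases "c \<in> L")
        case True
        then have "lt c b" using bc \<open>b \<in> L\<close> B2 unfolding lt'_def by blast
        then show ?thesis using A4[OF E(3) E(2) E(1)] ba True unfolding cf'_def by blast
      next
        case False
        then have "cf b c" using bc \<open>b \<in> L\<close> unfolding lt'_def by blast
        then have "cf a c" using A6 A7 E ba by blast
        then show ?thesis using ba False unfolding cf'_def by blast
      qed
    next
      case False
      then have "lt b c" "c \<notin> L" using bc unfolding lt'_def by blast+
      moreover have "(cf a b \<and> a \<notin> L) \<or> (lt a b \<and> a \<in> L)" using ab False unfolding cf'_def by blast
      ultimately show ?thesis using A4 A7 E unfolding cf'_def by blast
    qed
  qed
  ultimately show ?thesis by simp
qed


lemma switch_pol_lem:
  assumes "is_pes (E, lt, cf)" "pes_config (E, lt, cf) L" "pes_config (E, lt, cf) Y"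
    and pol: "\<forall>e\<in>E. pol e = (if e \<in> Y then -1 else 1)"
  shows "is_polarized (switch_pol L ((E, lt, cf), pol))"
proof -
  have A1: "\<And>a b. lt a b \<Longrightarrow> a \<in> E \<and> b \<in> E"
   and A6: "\<And>a b. a\<in>E \<Longrightarrow> b\<in>E \<Longrightarrow> cf a b \<Longrightarrow> cf b a"
    using assms(1) unfolding is_pes_def prod.case by blast+
  have B1: "L \<subseteq> E" and B2: "\<And>a b. a\<in>L \<Longrightarrow> b\<in>L \<Longrightarrow> \<not> cf a b"
   and B3: "\<And>a b. b\<in>L \<Longrightarrow> a\<in>E \<Longrightarrow> lt a b \<Longrightarrow> a \<in> L"
    using assms(2) unfolding pes_config_def prod.case by blast+
  have C1: "Y \<subseteq> E" and C2: "\<And>a b. a\<in>Y \<Longrightarrow> b\<in>Y \<Longrightarrow> \<not> cf a b"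
   and C3: "\<And>a b. b\<in>Y \<Longrightarrow> a\<in>E \<Longrightarrow> lt a b \<Longrightarrow> a \<in> Y"
    using assms(3) unfolding pes_config_def prod.case by blast+
  define lt' where "lt' = (\<lambda>a b. (lt a b \<and> a \<notin> L \<and> b \<notin> L) \<or> (lt b a \<and> a \<in> L \<and> b \<in> L) \<or> (cf a b \<and> a \<in> L))"
  define cf' where "cf' = (\<lambda>a b. (cf a b \<and> a \<notin> L \<and> b \<notin> L) \<or>
             (lt a b \<and> a \<in> L \<and> b \<notin> L) \<or> (lt b a \<and> b \<in> L \<and> a \<notin> L))"
  define pol' where "pol' = (\<lambda>e. if e \<in> L then - pol e else pol e)"
  have sw: "switch_pol L ((E, lt, cf), pol) = ((E, lt', cf'), pol')"
    unfolding switch_pol_def switch_def lt'_def cf'_def pol'_def by simp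
  have pes: "is_pes (E, lt', cf')"
    using switch_pes[OF assms(1,2)] unfolding switch_def lt'_def cf'_def by simp
  have N: "{e \<in> E. pol' e < 0} = {e \<in> E. (e \<in> L) \<noteq> (e \<in> Y)}"
    using pol unfolding pol'_def by auto
  have P: "\<forall>e\<in>E. pol' e \<in> {-1, 1}"
    using pol unfolding pol'_def by auto
  have Q: "pes_config (E, lt', cf') {e \<in> E. (e \<in> L) \<noteq> (e \<in> Y)}"
    unfolding pes_config_def prod.case
  proof (intro conjI ballI allI impI)
    show "{e \<in> E. (e \<in> L) \<noteq> (e \<in> Y)} \<subseteq> E" by blast
  next
    fix a b assume a: "a \<in> {e \<in> E. (e \<in> L) \<noteq> (e \<in> Y)}" and b: "b \<in> {e \<in> E. (e \<in> L) \<noteq> (e \<in> Y)}"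
    show "\<not> cf' a b"
    proof
      assume c: "cf' a b"
      consider "cf a b" "a \<notin> L" "b \<notin> L" | "lt a b" "a \<in> L" "b \<notin> L" | "lt b a" "b \<in> L" "a \<notin> L"
        using c unfolding cf'_def by blast
      then show False
      proof cases
        case 1 then show ?thesis using a b C2 by blast
      next
        case 2 then show ?thesis using a b C3 by blast
      next
        case 3 then show ?thesis using a b C3 by blast
      qed
    qed
  next
    fix a b assume b: "b \<in> {e \<in> E. (e \<in> L) \<noteq> (e \<in> Y)}" and aE: "a \<in> E" and l: "lt' a b"
    consider "lt a b" "a \<notin> L" "b \<notin> L" | "lt b a" "a \<in> L" "b \<in> L" | "cf a b" "a \<in> L"
      using l unfolding lt'_def by blast
    then show "a \<in> {e \<in> E. (e \<in> L) \<noteq> (e \<in> Y)}"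
    proof cases
      case 1 then show ?thesis using b aE C3 by blast
    next
      case 2 then show ?thesis using b aE C3 A1 by blast
    next
      case 3
      then have "b \<notin> L" using B2 by blast
      then have "b \<in> Y" using b by blast
      then have "a \<notin> Y" using C2 3 by blast
      then show ?thesis using aE 3 by blast
    qed
  qed
  show ?thesis unfolding sw is_polarized_def prod.case fst_conv
    using pes P Q N by simp
qed

theorem mainTheorem14:
  fixes E :: "'a set" and X :: "'a set set" and y x :: "'a set"
  assumes "stable E X"
    and "y \<in> X" and "finite y"
    and "x \<in> X" and "finite x"
  shows "is_polarized (switch_pol (prime_floor X x) (ES_pol X y))"
proof -
  have e: "ES_of X = (primes X, (\<lambda>p q. p \<in> primes X \<and> q \<in> primes X \<and> p \<subset> q),
     (\<lambda>p q. p \<in> primes X \<and> q \<in> primes X \<and> \<not> consistent X p q))"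
    by (simp add: ES_of_def)
  have pe: "\<forall>e\<in>primes X. pol_of y e = (if e \<in> prime_floor X y then -1 else 1)"
    by (simp add: pol_of_def prime_floor_def)
  show ?thesis
    unfolding ES_pol_def
    using switch_pol_lem[OF ES_pes[OF assms(1), unfolded e] ES_floor[OF assms(1,4), unfolded e]
       ES_floor[OF assms(1,2), unfolded e] pe] e by simp
qed

end
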